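(* Let $G$ be a simple connected graph and let $v$ be a real eigenvector of $\mathcal M$ with $\mathcal Mv=\mu v$, $\mu>0$. Let $S=\{i: v_i\ge0\}$ and let $\theta\in[0,\pi/2)$ be the angle between $|v|=(|v_1|,\dots,|v_n|)^{\mathsf T}$ and $\delta$. If $\mu>\tan^2\theta$, then $Q(S)>0$.
   Context: $G=(V,E)$ is a finite, undirected, unweighted, simple connected graph with adjacency matrix $A$, degrees $d_i$, $D=\mathrm{Diag}(d_i)$, $\delta=(\sqrt{d_1},\dots,\sqrt{d_n})^{\mathsf T}$, $\mathrm{vol}\, S=\sum_{i\in S}d_i$, $\mathbb 1_S$ the characteristic vector of $S$. $\mathcal M=D^{-1/2}AD^{-1/2}-\frac{1}{\mathrm{vol}\, V}\delta\delta^{\mathsf T}$. The modularity of $S$ is $Q(S)=\mathbb 1_S^{\mathsf T}A\mathbb 1_S-(\mathrm{vol}\, S)^2/\mathrm{vol}\, V$. *)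

theory Defs
  imports "HOL-Analysis.Analysis"
begin

definition simple_graph :: "'a set \<Rightarrow> ('a \<Rightarrow> 'a \<Rightarrow> bool) \<Rightarrow> bool" where
  "simple_graph V E \<longleftrightarrow> finite V \<and> V \<noteq> {} \<and>
     (\<forall>x y. E x y \<longrightarrow> x \<in> V \<and> y \<in> V) \<and>
     (\<forall>x y. E x y \<longrightarrow> E y x) \<and> (\<forall>x. \<not> E x x)"

definition connected_graph :: "'a set \<Rightarrow> ('a \<Rightarrow> 'a \<Rightarrow> bool) \<Rightarrow> bool" where
  "connected_graph V E \<longleftrightarrow> (\<forall>x\<in>V. \<forall>y\<in>V. E\<^sup>*\<^sup>* x y)"

definition adj :: "('a \<Rightarrow> 'a \<Rightarrow> bool) \<Rightarrow> 'a \<Rightarrow> 'a \<Rightarrow> real" where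
  "adj E i j = (if E i j then 1 else 0)"

definition degree :: "'a set \<Rightarrow> ('a \<Rightarrow> 'a \<Rightarrow> bool) \<Rightarrow> 'a \<Rightarrow> real" where
  "degree V E i = (\<Sum>j\<in>V. adj E i j)"

definition vol :: "'a set \<Rightarrow> ('a \<Rightarrow> 'a \<Rightarrow> bool) \<Rightarrow> 'a set \<Rightarrow> real" where
  "vol V E S = (\<Sum>i\<in>S. degree V E i)"

definition delta :: "'a set \<Rightarrow> ('a \<Rightarrow> 'a \<Rightarrow> bool) \<Rightarrow> 'a \<Rightarrow> real" where
  "delta V E i = sqrt (degree V E i)"

definition modmat :: "'a set \<Rightarrow> ('a \<Rightarrow> 'a \<Rightarrow> bool) \<Rightarrow> 'a \<Rightarrow> 'a \<Rightarrow> real" where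
  "modmat V E i j = adj E i j / (delta V E i * delta V E j)
      - delta V E i * delta V E j / vol V E V"

definition modularity :: "'a set \<Rightarrow> ('a \<Rightarrow> 'a \<Rightarrow> bool) \<Rightarrow> 'a set \<Rightarrow> real" where
  "modularity V E S = (\<Sum>i\<in>S. \<Sum>j\<in>S. adj E i j) - (vol V E S)^2 / vol V E V"

definition vinner :: "'a set \<Rightarrow> ('a \<Rightarrow> real) \<Rightarrow> ('a \<Rightarrow> real) \<Rightarrow> real" where
  "vinner V x y = (\<Sum>i\<in>V. x i * y i)"

definition vnorm :: "'a set \<Rightarrow> ('a \<Rightarrow> real) \<Rightarrow> real" where
  "vnorm V x = sqrt (vinner V x x)"

definition vangle :: "'a set \<Rightarrow> ('a \<Rightarrow> real) \<Rightarrow> ('a \<Rightarrow> real) \<Rightarrow> real" where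
  "vangle V x y = arccos (vinner V x y / (vnorm V x * vnorm V y))"

end

theory Submission
  imports Defs
begin

definition bf :: "'a set \<Rightarrow> ('a \<Rightarrow> 'a \<Rightarrow> real) \<Rightarrow> ('a \<Rightarrow> real) \<Rightarrow> ('a \<Rightarrow> real) \<Rightarrow> real" where
  "bf V M x y = (\<Sum>i\<in>V. \<Sum>j\<in>V. M i j * x i * y j)"

lemma bf_lin3_left:
  "bf V M (\<lambda>i. s i - a * d i - t * v i) x = bf V M s x - a * bf V M d x - t * bf V M v x"
  unfolding bf_def by (simp add: algebra_simps sum.distrib sum_subtractf sum_distrib_left)

lemma bf_lin3_right:
  "bf V M x (\<lambda>i. s i - a * d i - t * v i) = bf V M x s - a * bf V M x d - t * bf V M x v"
  unfolding bf_def by (simp add: algebra_simps sum.distrib sum_subtractf sum_distrib_left)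

lemma vinner_lin3_left:
  "vinner V (\<lambda>i. s i - a * d i - t * v i) x = vinner V s x - a * vinner V d x - t * vinner V v x"
  unfolding vinner_def by (simp add: algebra_simps sum.distrib sum_subtractf sum_distrib_left)

lemma vinner_lin3_right:
  "vinner V x (\<lambda>i. s i - a * d i - t * v i) = vinner V x s - a * vinner V x d - t * vinner V x v"
  unfolding vinner_def by (simp add: algebra_simps sum.distrib sum_subtractf sum_distrib_left)

lemma vinner_sym: "vinner V x y = vinner V y x"
  unfolding vinner_def by (simp add: mult.commute)

lemma bf_sym:
  assumes "\<forall>i j. M i j = M j i"
  shows "bf V M x y = bf V M y x"
  unfolding bf_def
  by (subst sum.swap) (simp add: assms mult.commute mult.left_commute)

lemma key:
  fixes M :: "'a \<Rightarrow> 'a \<Rightarrow> real"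
  assumes sym: "\<forall>i j. M i j = M j i"
    and eig: "\<forall>x. bf V M x v = \<mu> * vinner V x v"
    and ker: "\<forall>x. bf V M x d = 0"
    and neg: "\<forall>x. vinner V x d = 0 \<longrightarrow> bf V M x x \<ge> - vinner V x x"
    and vd: "vinner V v d = 0" and npos: "vinner V v v > 0" and dpos: "vinner V d d > 0"
  shows "bf V M s s \<ge> (1+\<mu>) * (vinner V s v)^2 / vinner V v v
            - (vinner V s s - (vinner V s d)^2 / vinner V d d)"
proof -
  define a where "a = vinner V s d / vinner V d d"
  define t where "t = vinner V s v / vinner V v v"
  define r where "r = (\<lambda>i. s i - a * d i - t * v i)"
  have rd: "vinner V r d = 0"
    unfolding r_def vinner_lin3_left using dpos vd by (simp add: a_def vinner_sym[of V v d])
  have rv: "vinner V r v = 0"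
    unfolding r_def vinner_lin3_left using npos vd by (simp add: t_def vinner_sym[of V d v])
  have "bf V M r r = bf V M r s - a * bf V M r d - t * bf V M r v"
    by (simp add: r_def bf_lin3_right)
  also have "\<dots> = bf V M r s" using ker eig rv bf_sym[OF sym, of V r v] by simp
  also have "\<dots> = bf V M s s - a * bf V M d s - t * bf V M v s"
    by (simp add: r_def bf_lin3_left)
  also have "\<dots> = bf V M s s - t * \<mu> * vinner V s v"
    using ker eig bf_sym[OF sym, of V d s] bf_sym[OF sym, of V v s] vd
    by (simp add: vinner_sym)
  finally have brr: "bf V M r r = bf V M s s - \<mu> * (vinner V s v)^2 / vinner V v v"
    by (simp add: t_def power2_eq_square)
  have "vinner V r r = vinner V r s - a * vinner V r d - t * vinner V r v"
    unfolding r_def by (rule vinner_lin3_right)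
  also have "\<dots> = vinner V r s" using rd rv vinner_sym[of V r] by simp
  also have "\<dots> = vinner V s s - a * vinner V d s - t * vinner V v s"
    by (simp add: r_def vinner_lin3_left)
  finally have rr: "vinner V r r = vinner V s s - (vinner V s d)^2 / vinner V d d - (vinner V s v)^2 / vinner V v v"
    by (simp add: a_def t_def power2_eq_square vinner_sym)
  have "bf V M r r \<ge> - vinner V r r" using neg rd by blast
  then show ?thesis using brr rr by (simp add: algebra_simps add_divide_distrib diff_divide_distrib)
qed


lemma deg_pos:
  assumes sg: "simple_graph V E" and cg: "connected_graph V E"
    and nz: "\<exists>i\<in>V. v i \<noteq> 0"
    and eig: "\<forall>i\<in>V. (\<Sum>j\<in>V. modmat V E i j * v j) = \<mu> * v i"
    and mu: "\<mu> > 0" and iV: "i \<in> V"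
  shows "degree V E i > 0"
proof (rule ccontr)
  assume "\<not> degree V E i > 0"
  moreover have "degree V E i \<ge> 0" unfolding degree_def adj_def by (rule sum_nonneg) simp
  ultimately have d0: "degree V E i = 0" by simp
  have fin: "finite V" and EV: "\<And>x y. E x y \<Longrightarrow> y \<in> V" using sg unfolding simple_graph_def by auto
  have noE: "\<not> E i j" for j
  proof
    assume Eij: "E i j"
    then have "j \<in> V" by (rule EV)
    then have "adj E i j \<le> degree V E i" unfolding degree_def
      using fin by (intro member_le_sum) (auto simp: adj_def)
    then show False using d0 Eij by (simp add: adj_def)
  qed
  have yi: "y = i" if "y \<in> V" for y
  proof -
    have "E\<^sup>*\<^sup>* i y" using cg iV that unfolding connected_graph_def by blast
    then show "y = i"
    proof (cases rule: converse_rtranclpE)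
      case (step z) then show ?thesis using noE by blast
    qed simp
  qed
  have "V = {i}" using yi iV by blast
  moreover have "modmat V E i i = 0"
    using d0 by (simp add: modmat_def delta_def)
  ultimately have "\<mu> * v i = 0" using eig iV by simp
  then show False using mu nz \<open>V = {i}\<close> by simp
qed


theorem corollary5p3:
  fixes V :: "'a set" and E :: "'a \<Rightarrow> 'a \<Rightarrow> bool" and v :: "'a \<Rightarrow> real" and \<mu> :: real
  assumes "simple_graph V E" and "connected_graph V E"
    and "\<exists>i\<in>V. v i \<noteq> 0"
    and "\<forall>i\<in>V. (\<Sum>j\<in>V. modmat V E i j * v j) = \<mu> * v i"
    and "\<mu> > 0"
    and "\<mu> > (tan (vangle V (\<lambda>i. \<bar>v i\<bar>) (delta V E)))^2"
  shows "modularity V E {i\<in>V. v i \<ge> 0} > 0"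
proof -
  note sg = assms(1) and cg = assms(2) and nz = assms(3) and eigv = assms(4) and mu = assms(5)
    and tanc = assms(6)
  define d where "d = degree V E"
  define \<delta> where "\<delta> = delta V E"
  define W where "W = vol V E V"
  define M where "M = modmat V E"
  define S where "S = {i\<in>V. v i \<ge> 0}"
  have fin: "finite V" and Esym: "\<And>x y. E x y \<Longrightarrow> E y x" using sg unfolding simple_graph_def by auto
  have adjsym: "adj E i j = adj E j i" for i j using Esym unfolding adj_def by metis
  have dpos: "\<And>i. i \<in> V \<Longrightarrow> d i > 0" unfolding d_def using deg_pos[OF sg cg nz eigv mu] by blast
  have \<delta>pos: "\<And>i. i \<in> V \<Longrightarrow> \<delta> i > 0" unfolding \<delta>_def delta_def using dpos d_def by simp
  have \<delta>sq: "\<And>i. i \<in> V \<Longrightarrow> \<delta> i * \<delta> i = d i" unfolding \<delta>_def delta_def d_def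
    using dpos d_def by (simp add: less_imp_le)
  have Vne: "V \<noteq> {}" using sg unfolding simple_graph_def by auto
  have Wpos: "W > 0" unfolding W_def vol_def using dpos fin Vne by (intro sum_pos) (auto simp: d_def)
  have Msym: "\<forall>i j. M i j = M j i" unfolding M_def modmat_def using adjsym by (simp add: mult.commute)
  have eig: "\<forall>x. bf V M x v = \<mu> * vinner V x v"
  proof
    fix x
    have "bf V M x v = (\<Sum>i\<in>V. x i * (\<Sum>j\<in>V. M i j * v j))"
      unfolding bf_def by (simp add: sum_distrib_left mult_ac)
    also have "\<dots> = (\<Sum>i\<in>V. x i * (\<mu> * v i))"
      using eigv by (intro sum.cong) (auto simp: M_def)
    finally show "bf V M x v = \<mu> * vinner V x v"
      unfolding vinner_def by (simp add: sum_distrib_left mult_ac)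
  qed
  have row: "(\<Sum>j\<in>V. M i j * \<delta> j) = 0" if iV: "i \<in> V" for i
  proof -
    have "(\<Sum>j\<in>V. M i j * \<delta> j) = (\<Sum>j\<in>V. adj E i j / \<delta> i - \<delta> i * d j / W)"
    proof (intro sum.cong refl)
      fix j assume jV: "j \<in> V"
      have "M i j * \<delta> j = adj E i j * \<delta> j / (\<delta> i * \<delta> j) - \<delta> i * (\<delta> j * \<delta> j) / W"
        unfolding M_def modmat_def \<delta>_def[symmetric] W_def[symmetric] by (simp add: field_simps)
      also have "\<dots> = adj E i j / \<delta> i - \<delta> i * d j / W"
        using \<delta>pos[OF iV] \<delta>pos[OF jV] \<delta>sq[OF jV] by simp
      finally show "M i j * \<delta> j = adj E i j / \<delta> i - \<delta> i * d j / W" .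
    qed
    also have "\<dots> = (\<Sum>j\<in>V. adj E i j) / \<delta> i - \<delta> i * (\<Sum>j\<in>V. d j) / W"
      by (simp add: sum_subtractf sum_divide_distrib sum_distrib_left)
    also have "\<dots> = d i / \<delta> i - \<delta> i"
      using Wpos by (simp add: d_def degree_def W_def vol_def)
    also have "\<dots> = 0" using \<delta>pos[OF iV] \<delta>sq[OF iV] by (simp add: field_simps)
    finally show ?thesis .
  qed
  have ker: "\<forall>x. bf V M x \<delta> = 0"
  proof
    fix x
    have "bf V M x \<delta> = (\<Sum>i\<in>V. x i * (\<Sum>j\<in>V. M i j * \<delta> j))"
      unfolding bf_def by (simp add: sum_distrib_left mult_ac)
    also have "\<dots> = 0" using row by simp
    finally show "bf V M x \<delta> = 0" .
  qed
  have neg: "\<forall>x. vinner V x \<delta> = 0 \<longrightarrow> bf V M x x \<ge> - vinner V x x"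
  proof (intro allI impI)
    fix x assume xd: "vinner V x \<delta> = 0"
    define y where "y = (\<lambda>i. x i / \<delta> i)"
    have b1: "bf V M x x = (\<Sum>i\<in>V. \<Sum>j\<in>V. adj E i j * y i * y j) - (\<Sum>i\<in>V. \<Sum>j\<in>V. (x i * \<delta> i) * (x j * \<delta> j)) / W"
    proof -
      have "bf V M x x = (\<Sum>i\<in>V. \<Sum>j\<in>V. adj E i j * y i * y j - (x i * \<delta> i) * (x j * \<delta> j) / W)"
        unfolding bf_def
      proof (intro sum.cong refl)
        fix i j assume "i \<in> V" "j \<in> V"
        then show "M i j * x i * x j = adj E i j * y i * y j - (x i * \<delta> i) * (x j * \<delta> j) / W"
          using \<delta>pos unfolding M_def modmat_def \<delta>_def[symmetric] W_def[symmetric] y_def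
          by (simp add: field_simps)
      qed
      then show ?thesis by (simp add: sum_subtractf sum_divide_distrib)
    qed
    have "(\<Sum>i\<in>V. \<Sum>j\<in>V. (x i * \<delta> i) * (x j * \<delta> j)) = (vinner V x \<delta>)^2"
      unfolding vinner_def power2_eq_square by (simp add: sum_product)
    with xd b1 have b2: "bf V M x x = (\<Sum>i\<in>V. \<Sum>j\<in>V. adj E i j * y i * y j)" by simp
    have dy: "(\<Sum>i\<in>V. \<Sum>j\<in>V. adj E i j * (y i)^2) = vinner V x x"
    proof -
      have "(\<Sum>i\<in>V. \<Sum>j\<in>V. adj E i j * (y i)^2) = (\<Sum>i\<in>V. d i * (y i)^2)"
        unfolding d_def degree_def by (simp add: sum_distrib_right)
      also have "\<dots> = vinner V x x" unfolding vinner_def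
      proof (intro sum.cong refl)
        fix i assume iV: "i \<in> V"
        show "d i * (y i)^2 = x i * x i"
          using \<delta>pos[OF iV] \<delta>sq[OF iV, symmetric] unfolding y_def
          by (simp add: field_simps power2_eq_square)
      qed
      finally show ?thesis .
    qed
    have dy2: "(\<Sum>i\<in>V. \<Sum>j\<in>V. adj E i j * (y j)^2) = vinner V x x"
      using dy by (subst sum.swap) (simp add: adjsym)
    have "0 \<le> (\<Sum>i\<in>V. \<Sum>j\<in>V. adj E i j * (y i + y j)^2)"
      by (intro sum_nonneg) (simp add: adj_def)
    also have "\<dots> = (\<Sum>i\<in>V. \<Sum>j\<in>V. adj E i j * (y i)^2) + 2 * (\<Sum>i\<in>V. \<Sum>j\<in>V. adj E i j * y i * y j)
        + (\<Sum>i\<in>V. \<Sum>j\<in>V. adj E i j * (y j)^2)"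
      by (simp add: power2_eq_square algebra_simps sum.distrib sum_distrib_left)
    finally show "bf V M x x \<ge> - vinner V x x" using dy dy2 b2 by simp
  qed
  have dd: "vinner V \<delta> \<delta> = W" unfolding vinner_def W_def vol_def
    using \<delta>sq by (intro sum.cong) (auto simp: d_def)
  have vd: "vinner V v \<delta> = 0"
  proof -
    have "\<mu> * vinner V \<delta> v = bf V M \<delta> v" using eig by simp
    also have "\<dots> = bf V M v \<delta>" by (rule bf_sym[OF Msym])
    also have "\<dots> = 0" using ker by simp
    finally show ?thesis using mu by (simp add: vinner_sym)
  qed
  obtain i0 where i0: "i0 \<in> V" "v i0 \<noteq> 0" using nz by blast
  have npos: "vinner V v v > 0" unfolding vinner_def
    using i0 fin by (intro sum_pos2[of V i0]) (auto simp: zero_less_mult_iff)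
  define s where "s = (\<lambda>i. if v i \<ge> 0 then \<delta> i else 0)"
  have K: "bf V M s s \<ge> (1+\<mu>) * (vinner V s v)^2 / vinner V v v
            - (vinner V s s - (vinner V s \<delta>)^2 / vinner V \<delta> \<delta>)"
    by (rule key[OF Msym eig ker neg vd npos]) (simp add: dd Wpos)
  have Q: "bf V M s s = modularity V E S"
  proof -
    have inner: "(\<Sum>j\<in>V. M i j * s i * s j) = (if v i \<ge> 0 then (\<Sum>j\<in>S. adj E i j - d i * d j / W) else 0)"
      if iV: "i \<in> V" for i
    proof (cases "v i \<ge> 0")
      case True
      have "(\<Sum>j\<in>V. M i j * s i * s j) = (\<Sum>j\<in>V. if v j \<ge> 0 then adj E i j - d i * d j / W else 0)"
      proof (intro sum.cong refl)
        fix j assume jV: "j \<in> V"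
        show "M i j * s i * s j = (if v j \<ge> 0 then adj E i j - d i * d j / W else 0)"
        proof (cases "v j \<ge> 0")
          case True2: True
          have "M i j * s i * s j = adj E i j * (\<delta> i * \<delta> j) / (\<delta> i * \<delta> j) - (\<delta> i * \<delta> i) * (\<delta> j * \<delta> j) / W"
            unfolding M_def modmat_def \<delta>_def[symmetric] W_def[symmetric] s_def using True True2
            by (simp add: field_simps)
          also have "\<dots> = adj E i j - d i * d j / W"
            using \<delta>pos[OF iV] \<delta>pos[OF jV] \<delta>sq[OF iV] \<delta>sq[OF jV] by simp
          finally show ?thesis using True2 by simp
        qed (simp add: s_def)
      qed
      also have "\<dots> = (\<Sum>j\<in>S. adj E i j - d i * d j / W)"
        unfolding S_def using fin by (simp add: sum.inter_filter)
      finally show ?thesis using True by simp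
    qed (simp add: s_def)
    have "bf V M s s = (\<Sum>i\<in>V. if v i \<ge> 0 then (\<Sum>j\<in>S. adj E i j - d i * d j / W) else 0)"
      unfolding bf_def using inner by (intro sum.cong) auto
    also have "\<dots> = (\<Sum>i\<in>S. \<Sum>j\<in>S. adj E i j - d i * d j / W)"
      unfolding S_def by (rule sum.inter_filter[OF fin, symmetric])
    also have "\<dots> = (\<Sum>i\<in>S. \<Sum>j\<in>S. adj E i j) - (\<Sum>i\<in>S. \<Sum>j\<in>S. d i * d j) / W"
      by (simp add: sum_subtractf sum_divide_distrib)
    also have "(\<Sum>i\<in>S. \<Sum>j\<in>S. d i * d j) = (vol V E S)^2"
      unfolding vol_def d_def power2_eq_square by (simp add: sum_product)
    finally show ?thesis unfolding modularity_def W_def by simp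
  qed
  have ss: "vinner V s s = vol V E S"
  proof -
    have "vinner V s s = (\<Sum>i\<in>V. if v i \<ge> 0 then d i else 0)"
      unfolding vinner_def s_def using \<delta>sq by (intro sum.cong) auto
    also have "\<dots> = vol V E S" unfolding vol_def S_def d_def using fin by (simp add: sum.inter_filter)
    finally show ?thesis .
  qed
  have sd: "vinner V s \<delta> = vol V E S"
  proof -
    have "vinner V s \<delta> = (\<Sum>i\<in>V. if v i \<ge> 0 then d i else 0)"
      unfolding vinner_def s_def using \<delta>sq by (intro sum.cong) auto
    also have "\<dots> = vol V E S" unfolding vol_def S_def d_def using fin by (simp add: sum.inter_filter)
    finally show ?thesis .
  qed
  define n where "n = vinner V v v"
  define qq where "qq = vinner V (\<lambda>i. \<bar>v i\<bar>) \<delta>"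
  have qq2: "qq = 2 * vinner V s v"
  proof -
    have "qq = (\<Sum>i\<in>V. 2 * (s i * v i) - v i * \<delta> i)" unfolding qq_def vinner_def
      by (intro sum.cong refl) (auto simp: s_def)
    also have "\<dots> = 2 * vinner V s v - vinner V v \<delta>"
      unfolding vinner_def by (simp add: sum_subtractf sum_distrib_left)
    finally show ?thesis using vd by simp
  qed
  have qqpos: "qq > 0" unfolding qq_def vinner_def
    using i0 fin \<delta>pos by (intro sum_pos2[of V i0]) (auto simp: less_imp_le)
  have nW: "vnorm V (\<lambda>i. \<bar>v i\<bar>) * vnorm V \<delta> = sqrt (n * W)"
    unfolding vnorm_def n_def using dd by (simp add: real_sqrt_mult vinner_def abs_mult_self_eq)
  have nWpos: "n * W > 0" using npos Wpos n_def by simp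
  define c where "c = qq / sqrt (n * W)"
  have cpos: "c > 0" unfolding c_def using qqpos nWpos by simp
  have CS: "qq^2 \<le> n * W"
  proof -
    have "qq^2 \<le> (\<Sum>i\<in>V. (\<bar>v i\<bar>)^2) * (\<Sum>i\<in>V. (\<delta> i)^2)"
      unfolding qq_def vinner_def by (rule Cauchy_Schwarz_ineq_sum)
    also have "\<dots> = n * W" using dd unfolding n_def vinner_def by (simp add: power2_eq_square)
    finally show ?thesis .
  qed
  have c2: "c^2 = qq^2 / (n * W)" unfolding c_def using nWpos by (simp add: power_divide)
  have c2le: "c^2 \<le> 1" using c2 CS nWpos by simp
  have cle: "c \<le> 1" using c2le cpos by (metis abs_of_pos abs_square_le_1)
  have ang: "vangle V (\<lambda>i. \<bar>v i\<bar>) (delta V E) = arccos c"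
    unfolding vangle_def c_def nW[unfolded \<delta>_def] qq_def \<delta>_def ..
  have "(tan (arccos c))^2 = (1 - c^2) / c^2"
    using cpos cle c2le by (simp add: tan_def sin_arccos power_divide)
  with tanc ang have "\<mu> > (1 - c^2) / c^2" by simp
  then have "(1 + \<mu>) * c^2 > 1" using cpos by (simp add: field_simps)
  then have "(1+\<mu>) * qq^2 > n * W" using c2 nWpos by (simp add: field_simps)
  then have q: "(1+\<mu>) * (2 * vinner V s v)^2 > vinner V v v * W" using qq2 n_def by simp
  have "(1+\<mu>) * (vinner V s v)^2 / vinner V v v > W / 4"
    using q npos by (simp add: field_simps)
  moreover have "W / 4 \<ge> vol V E S - (vol V E S)^2 / W"
  proof -
    have "0 \<le> (W - 2 * vol V E S)^2 / (4*W)" using Wpos by simp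
    also have "\<dots> = W / 4 - (vol V E S - (vol V E S)^2 / W)" using Wpos
      by (simp add: field_simps power2_eq_square)
    finally show ?thesis by simp
  qed
  moreover have "bf V M s s \<ge> (1+\<mu>) * (vinner V s v)^2 / vinner V v v - (vol V E S - (vol V E S)^2 / W)"
    using K ss sd dd by simp
  ultimately show ?thesis using Q unfolding S_def by linarith
qed

end
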